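(* For every integer $p\ge 1$ and every integer $n\ge p+2$, $$\sigma(K_{p,1,1},n)\;\ge\; 2\left\lfloor \frac{(p+1)(n-1)+2}{2}\right\rfloor .$$
   Context: A finite sequence $S=(d_1,\dots,d_n)$ of non-negative integers is graphical if it is the degree sequence of some simple graph on $n$ vertices (a realization of $S$). Write $\sigma(S)=d_1+\dots+d_n$. For a graph $H$, a graphical sequence $S$ is potentially $H$-graphical if some realization of $S$ contains $H$ as a subgraph. $K_{p,1,1}$ denotes the complete 3-partite graph with parts of sizes $p,1,1$. $\sigma(H,n)$ denotes the minimum even integer $l$ such that every $n$-term graphical sequence $S$ with $\sigma(S)\ge l$ is potentially $H$-graphical. $\lfloor x\rfloor$ is the largest integer $\le x$. *)

theory Defs
  imports Main
begin

definition simple_graph :: "nat \<Rightarrow> (nat \<Rightarrow> nat \<Rightarrow> bool) \<Rightarrow> bool" where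
  "simple_graph n E \<longleftrightarrow>
     (\<forall>i j. E i j \<longrightarrow> i < n \<and> j < n) \<and>
     (\<forall>i j. E i j \<longrightarrow> E j i) \<and>
     (\<forall>i. \<not> E i i)"

definition degree :: "nat \<Rightarrow> (nat \<Rightarrow> nat \<Rightarrow> bool) \<Rightarrow> nat \<Rightarrow> nat" where
  "degree n E i = card {j. j < n \<and> E i j}"

definition realizes :: "(nat \<Rightarrow> nat \<Rightarrow> bool) \<Rightarrow> nat list \<Rightarrow> bool" where
  "realizes E S \<longleftrightarrow> simple_graph (length S) E \<and>
     (\<forall>i < length S. degree (length S) E i = S ! i)"

definition graphical :: "nat list \<Rightarrow> bool" where
  "graphical S \<longleftrightarrow> (\<exists>E. realizes E S)"

definition contains_subgraph ::
  "nat \<Rightarrow> (nat \<Rightarrow> nat \<Rightarrow> bool) \<Rightarrow> nat \<Rightarrow> (nat \<Rightarrow> nat \<Rightarrow> bool) \<Rightarrow> bool" where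
  "contains_subgraph n E h EH \<longleftrightarrow>
     (\<exists>f. inj_on f {0..<h} \<and> f ` {0..<h} \<subseteq> {0..<n} \<and>
          (\<forall>i j. i < h \<longrightarrow> j < h \<longrightarrow> EH i j \<longrightarrow> E (f i) (f j)))"

definition potentially_graphical ::
  "nat \<Rightarrow> (nat \<Rightarrow> nat \<Rightarrow> bool) \<Rightarrow> nat list \<Rightarrow> bool" where
  "potentially_graphical h EH S \<longleftrightarrow> graphical S \<and>
     (\<exists>E. realizes E S \<and> contains_subgraph (length S) E h EH)"

definition sigma_H :: "nat \<Rightarrow> (nat \<Rightarrow> nat \<Rightarrow> bool) \<Rightarrow> nat \<Rightarrow> nat" where
  "sigma_H h EH n = (LEAST l. even l \<and>
     (\<forall>S. length S = n \<longrightarrow> graphical S \<longrightarrow> sum_list S \<ge> l \<longrightarrow>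
          potentially_graphical h EH S))"

definition K_p11_part :: "nat \<Rightarrow> nat" where
  "K_p11_part i = (if i = 0 then 0 else if i = 1 then 1 else 2)"

definition K_p11 :: "nat \<Rightarrow> nat \<Rightarrow> nat \<Rightarrow> bool" where
  "K_p11 p i j \<longleftrightarrow> i < p + 2 \<and> j < p + 2 \<and> K_p11_part i \<noteq> K_p11_part j"

end

theory Submission
  imports Defs
begin

definition dd :: "nat \<Rightarrow> nat \<Rightarrow> nat \<Rightarrow> nat" where
  "dd m i j = (j + (m - i)) mod m"

lemma dd_eq: "i < m \<Longrightarrow> j < m \<Longrightarrow> dd m i j = (if i \<le> j then j - i else j + m - i)"
proof (cases "i \<le> j")
  case True
  assume "i < m" "j < m"
  then have e: "j + (m - i) = (j - i) + m" using True by simp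
  have "dd m i j = ((j - i) + m) mod m" unfolding dd_def e ..
  also have "\<dots> = j - i" using \<open>j < m\<close> by simp
  finally show ?thesis using True by simp
next
  case False
  assume "i < m" "j < m"
  then show ?thesis using False unfolding dd_def by simp
qed

definition cD :: "nat \<Rightarrow> nat \<Rightarrow> nat set" where
  "cD m r = {d. 0 < d \<and> d < m \<and> (d \<le> r \<or> m - r \<le> d)}"

lemma card_cD: assumes "2*r < m" shows "card (cD m r) = 2*r"
proof -
  have "cD m r = {1..r} \<union> {m-r..<m}" using assms unfolding cD_def by auto
  moreover have "{1..r} \<inter> {m-r..<m} = {}" using assms by auto
  ultimately have "card (cD m r) = card {1..r} + card {m-r..<m}"
    by (simp add: card_Un_disjoint)
  then show ?thesis using assms by simp
qed

lemma card_circ: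
  assumes "i < m" "D \<subseteq> {..<m}"
  shows "card {j. j < m \<and> dd m i j \<in> D} = card D"
proof -
  let ?g = "\<lambda>d. (d + i) mod m"
  have m0: "m > 0" using assms by simp
  have fg: "dd m i (?g d) = d" if "d \<in> D" for d
  proof -
    have "d < m" using that assms by auto
    have "dd m i (?g d) = ((d + i) mod m + (m - i)) mod m" unfolding dd_def by simp
    also have "\<dots> = (d + i + (m - i)) mod m" by (simp add: mod_add_left_eq)
    also have "d + i + (m - i) = d + m" using assms by simp
    finally show ?thesis using \<open>d < m\<close> by simp
  qed
  have gf: "?g (dd m i j) = j" if "j < m" for j
  proof -
    have "?g (dd m i j) = ((j + (m - i)) mod m + i) mod m" unfolding dd_def by simp
    also have "\<dots> = (j + (m - i) + i) mod m" by (simp add: mod_add_left_eq)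
    also have "j + (m - i) + i = j + m" using assms by simp
    finally show ?thesis using that by simp
  qed
  have "{j. j < m \<and> dd m i j \<in> D} = ?g ` D"
  proof
    show "{j. j < m \<and> dd m i j \<in> D} \<subseteq> ?g ` D"
    proof
      fix j assume "j \<in> {j. j < m \<and> dd m i j \<in> D}"
      then have "j < m" "dd m i j \<in> D" by auto
      then show "j \<in> ?g ` D" using gf[of j] by (metis image_eqI)
    qed
    show "?g ` D \<subseteq> {j. j < m \<and> dd m i j \<in> D}"
      using fg m0 by auto
  qed
  moreover have "inj_on ?g D"
    by (rule inj_on_inverseI[where g = "dd m i"]) (rule fg)
  ultimately show ?thesis by (simp add: card_image)
qed

definition GG :: "nat \<Rightarrow> nat \<Rightarrow> bool \<Rightarrow> nat \<Rightarrow> nat \<Rightarrow> bool" where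
  "GG m r odk i j =
    ((i < m \<and> j < m \<and> (dd m i j \<in> cD m r \<or>
        (odk \<and> ((i < m div 2 \<and> j = i + m div 2) \<or> (j < m div 2 \<and> i = j + m div 2)))))
     \<or> (i = m \<and> j < m) \<or> (j = m \<and> i < m))"

lemma GG_simple: "simple_graph (m+1) (GG m r odk)"
proof -
  have 1: "\<forall>i j. GG m r odk i j \<longrightarrow> i < m + 1 \<and> j < m + 1" unfolding GG_def by auto
  have sym: "dd m j i \<in> cD m r" if "i < m" "j < m" "dd m i j \<in> cD m r" for i j
    using that by (auto simp: dd_eq cD_def split: if_splits)
  have 2: "\<forall>i j. GG m r odk i j \<longrightarrow> GG m r odk j i" using sym unfolding GG_def by auto
  have 3: "\<forall>i. \<not> GG m r odk i i"
    unfolding GG_def by (auto simp: dd_def cD_def)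
  show ?thesis unfolding simple_graph_def using 1 2 3 by blast
qed

lemma GG_deg_apex: "degree (m+1) (GG m r odk) m = m"
proof -
  have "{j. j < m + 1 \<and> GG m r odk m j} = {..<m}"
    unfolding GG_def by (auto simp: dd_def)
  then show ?thesis unfolding degree_def by simp
qed

lemma GG_deg:
  assumes "i < m" "2*r < m" "odk \<Longrightarrow> r < m div 2 \<and> m div 2 + r < m"
  shows "degree (m+1) (GG m r odk) i = 2*r + (if odk \<and> i < 2*(m div 2) then 1 else 0) + 1"
proof -
  define h where "h = m div 2"
  define Ms where "Ms = (if odk \<and> i < h then {i+h} else if odk \<and> h \<le> i \<and> i < 2*h then {i-h} else {})"
  define Cs where "Cs = {j. j < m \<and> dd m i j \<in> cD m r}"
  have eq: "{j. j < m + 1 \<and> GG m r odk i j} = insert m (Cs \<union> Ms)"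
  proof -
    have "2*h \<le> m" unfolding h_def by simp
    then show ?thesis using assms(1) unfolding GG_def Cs_def Ms_def h_def[symmetric] by auto
  qed
  have fin: "finite Cs" unfolding Cs_def by simp
  have finM: "finite Ms" unfolding Ms_def by simp
  have mC: "m \<notin> Cs \<union> Ms" unfolding Cs_def Ms_def h_def using assms by auto
  have disj: "Cs \<inter> Ms = {}"
  proof (cases odk)
    case True
    then have rh: "r < h" "h + r < m" using assms(3) h_def by auto
    show ?thesis
    proof (rule ccontr)
      assume "Cs \<inter> Ms \<noteq> {}"
      then obtain j where j: "j \<in> Cs" "j \<in> Ms" by blast
      show False
      proof (cases "i < h")
        case True
        then have "j = i + h" using j(2) unfolding Ms_def by (auto split: if_splits)
        then have "dd m i j = h" using True rh assms(1) j(1) unfolding Cs_def by (simp add: dd_eq)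
        then show False using j(1) rh unfolding Cs_def cD_def by auto
      next
        case False
        then have "j = i - h" "h \<le> i" using j(2) unfolding Ms_def by (auto split: if_splits)
        moreover have "h > 0" using rh by simp
        ultimately have "dd m i j = m - h" using assms(1) by (simp add: dd_eq)
        then show False using j(1) rh unfolding Cs_def cD_def by auto
      qed
    qed
  next
    case False then show ?thesis unfolding Ms_def by simp
  qed
  have cC: "card Cs = 2*r" unfolding Cs_def
    using card_circ[OF assms(1), of "cD m r"] card_cD[OF assms(2)] by (auto simp: cD_def)
  have cM: "card Ms = (if odk \<and> i < 2*h then 1 else 0)" unfolding Ms_def by auto
  have "degree (m+1) (GG m r odk) i = card (insert m (Cs \<union> Ms))"
    unfolding degree_def eq ..
  also have "\<dots> = card Cs + card Ms + 1"
    using mC fin finM disj by (simp add: card_Un_disjoint)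
  finally show ?thesis using cC cM h_def by simp
qed

lemma sum_ind: "c \<le> m \<Longrightarrow> (\<Sum>i<m. (if i < c then 1 else 0::nat)) = c"
proof (induction m)
  case 0 then show ?case by simp
next
  case (Suc m)
  show ?case
  proof (cases "c \<le> m")
    case True then show ?thesis using Suc by simp
  next
    case False then have "c = Suc m" using Suc by simp
    then show ?thesis by simp
  qed
qed

lemma sum_list_le: "(\<forall>x\<in>set xs. x \<le> c) \<Longrightarrow> sum_list xs \<le> length xs * (c::nat)"
  by (induction xs) auto

lemma two_big:
  assumes R: "realizes E S" and C: "contains_subgraph (length S) E (p+2) (K_p11 p)"
  shows "\<exists>a b. a \<noteq> b \<and> a < length S \<and> b < length S \<and> S!a \<ge> p+1 \<and> S!b \<ge> p+1"
proof -
  let ?n = "length S"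
  obtain f where f: "inj_on f {0..<p+2}" "f ` {0..<p+2} \<subseteq> {0..<?n}"
    "\<forall>i j. i < p+2 \<longrightarrow> j < p+2 \<longrightarrow> K_p11 p i j \<longrightarrow> E (f i) (f j)"
    using C unfolding contains_subgraph_def by blast
  have big: "S ! (f a) \<ge> p + 1" if a: "a < 2" for a
  proof -
    define T where "T = {0..<p+2} - {a}"
    have "f ` T \<subseteq> {j. j < ?n \<and> E (f a) j}"
    proof
      fix x assume "x \<in> f ` T"
      then obtain t where t: "t \<in> T" "x = f t" by blast
      have "K_p11 p a t" using t(1) a unfolding T_def K_p11_def K_p11_part_def by auto
      then have "E (f a) (f t)" using f(3) t(1) a unfolding T_def by auto
      moreover have "f t < ?n" using f(2) t(1) unfolding T_def by (auto simp: image_subset_iff)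
      ultimately show "x \<in> {j. j < ?n \<and> E (f a) j}" using t by auto
    qed
    then have "card (f ` T) \<le> degree ?n E (f a)" unfolding degree_def
      by (intro card_mono) auto
    moreover have "card (f ` T) = p + 1"
    proof -
      have "inj_on f T" using f(1) unfolding T_def by (rule inj_on_subset) auto
      then have "card (f ` T) = card T" by (simp add: card_image)
      also have "card T = p + 1" unfolding T_def using a by simp
      finally show ?thesis .
    qed
    moreover have "f a < ?n" using f(2) a by (auto simp: image_subset_iff)
    ultimately show ?thesis using R unfolding realizes_def by auto
  qed
  have "f 0 \<noteq> f 1" using inj_onD[OF f(1), of 0 1] by auto
  moreover have "f 0 \<in> {0..<?n}" "f 1 \<in> {0..<?n}"
  proof -
    have a: "(0::nat) \<in> {0..<p+2}" and b: "(1::nat) \<in> {0..<p+2}" by auto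
    show "f 0 \<in> {0..<?n}" using f(2) imageI[OF a, of f] by (rule subsetD)
    show "f 1 \<in> {0..<?n}" using f(2) imageI[OF b, of f] by (rule subsetD)
  qed
  ultimately show ?thesis using big[of 0] big[of 1] by auto
qed

lemma div_helper: "2 * ((2*a + m + 2) div 2) \<le> 2*a + 2*(m div 2) + (2::nat)"
  by simp

theorem theorem1:
  fixes p n :: nat
  assumes "p \<ge> 1" and "n \<ge> p + 2"
  shows "sigma_H (p + 2) (K_p11 p) n \<ge> 2 * (((p + 1) * (n - 1) + 2) div 2)"
proof -
  define m where "m = n - 1"
  have nm: "n = m + 1" using assms m_def by simp
  define k where "k = p - 1"
  define r where "r = k div 2"
  define odk where "odk = odd k"
  define E where "E = GG m r odk"
  define S where "S = map (degree n E) [0..<n]"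
  have km: "k + 2 \<le> m" using assms k_def m_def by simp
  have r2: "2*r < m" using km r_def by simp
  have odc: "odk \<Longrightarrow> r < m div 2 \<and> m div 2 + r < m" using km r_def odk_def by auto
  have lenS: "length S = n" unfolding S_def by simp
  have realS: "realizes E S" unfolding realizes_def lenS
  proof
    show "simple_graph n E" using GG_simple[of m r odk] nm unfolding E_def by simp
    show "\<forall>i<n. degree n E i = S ! i" unfolding S_def by simp
  qed
  have deg: "degree n E i = 2*r + (if odk \<and> i < 2*(m div 2) then 1 else 0) + 1" if "i < m" for i
    using GG_deg[OF that r2 odc] nm unfolding E_def by simp
  have small: "S ! i \<le> p" if "i < m" for i
  proof -
    have "i < n" using that nm by simp
    then have "S ! i = degree n E i" unfolding S_def by simp
    then show ?thesis using deg[OF that] k_def r_def odk_def assms(1) by auto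
  qed
  have notpot: "\<not> potentially_graphical (p + 2) (K_p11 p) S"
  proof
    assume "potentially_graphical (p + 2) (K_p11 p) S"
    then obtain E' where "realizes E' S" "contains_subgraph (length S) E' (p+2) (K_p11 p)"
      unfolding potentially_graphical_def by blast
    from two_big[OF this] obtain a b where "a \<noteq> b" "a < n" "b < n" "S!a \<ge> p+1" "S!b \<ge> p+1"
      using lenS by auto
    then show False using small[of a] small[of b] nm by fastforce
  qed
  have sumS: "sum_list S = (\<Sum>i<m. degree n E i) + m"
  proof -
    have "sum_list S = (\<Sum>i\<in>{0..<n}. degree n E i)"
      unfolding S_def by (simp add: sum_set_upt_conv_sum_list_nat[symmetric])
    also have "\<dots> = (\<Sum>i<m+1. degree n E i)" using nm by (simp add: atLeast0LessThan)
    also have "\<dots> = (\<Sum>i<m. degree n E i) + m"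
      using GG_deg_apex[of m r odk] nm unfolding E_def by simp
    finally show ?thesis .
  qed
  have "(\<Sum>i<m. degree n E i) = (\<Sum>i<m. (2*r+1) + (if odk \<and> i < 2*(m div 2) then 1 else 0))"
    by (rule sum.cong) (auto simp: deg)
  also have "\<dots> = (\<Sum>i<m. (2*r+1)) + (\<Sum>i<m. (if odk \<and> i < 2*(m div 2) then 1 else 0))"
    by (rule sum.distrib)
  also have "(\<Sum>i<m. (if odk \<and> i < 2*(m div 2) then 1 else 0)) = (if odk then 2*(m div 2) else 0)"
  proof (cases odk)
    case True then show ?thesis using sum_ind[of "2*(m div 2)" m] by simp
  next
    case False then show ?thesis by simp
  qed
  also have "(\<Sum>i<m. (2*r+1)) = m*(2*r+1)" by simp
  finally have sumS2: "sum_list S = m*(2*r+2) + (if odk then 2*(m div 2) else 0)"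
    using sumS by simp
  define T where "T = 2 * (((p + 1) * (n - 1) + 2) div 2)"
  have TS: "T \<le> sum_list S + 2"
  proof (cases odk)
    case False
    then have "2*r + 2 = p + 1" using k_def r_def odk_def assms(1) by auto
    then have "sum_list S = m * (p+1)" using sumS2 False by simp
    then show ?thesis unfolding T_def m_def[symmetric] by (simp add: mult.commute)
  next
    case True
    then have p2: "2*r + 2 = p" using k_def r_def odk_def assms(1) by auto
    then have s: "sum_list S = m * p + 2*(m div 2)" using sumS2 True by simp
    define q where "q = r + 1"
    have q: "p = 2*q" using p2 q_def by simp
    have e1: "(p + 1) * m + 2 = 2*(m*q) + m + 2" unfolding q by (simp add: algebra_simps)
    have e2: "m * p = 2*(m*q)" unfolding q by (simp add: algebra_simps)
    have "T = 2 * ((2*(m*q) + m + 2) div 2)" unfolding T_def m_def[symmetric] e1 ..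
    also have "\<dots> \<le> 2*(m*q) + 2*(m div 2) + 2" by (rule div_helper)
    finally show ?thesis using s e2 by linarith
  qed
  define P where "P = (\<lambda>l. even l \<and>
     (\<forall>S. length S = n \<longrightarrow> graphical S \<longrightarrow> sum_list S \<ge> l \<longrightarrow>
          potentially_graphical (p+2) (K_p11 p) S))"
  have Pbig: "P (2*n*n + 2)"
    unfolding P_def
  proof (intro conjI allI impI)
    show "even (2*n*n+2)" by simp
  next
    fix S' :: "nat list" assume l: "length S' = n" and g: "graphical S'" and s: "2*n*n+2 \<le> sum_list S'"
    obtain E' where R: "realizes E' S'" using g unfolding graphical_def by blast
    have "\<forall>x\<in>set S'. x \<le> n"
    proof
      fix x assume "x \<in> set S'"
      then obtain i where i: "i < length S'" "S' ! i = x" by (auto simp: in_set_conv_nth)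
      have "degree n E' i \<le> n" unfolding degree_def
        using card_mono[of "{..<n}" "{j. j < n \<and> E' i j}"] by auto
      then show "x \<le> n" using R i l unfolding realizes_def by auto
    qed
    then have "sum_list S' \<le> n * n" using sum_list_le[of S' n] l by simp
    then show "potentially_graphical (p+2) (K_p11 p) S'" using s by simp
  qed
  have sig: "sigma_H (p + 2) (K_p11 p) n = Least P"
    unfolding sigma_H_def P_def by simp
  have PL: "P (Least P)" using Pbig by (rule LeastI)
  have Pd: "P l \<Longrightarrow> even l \<and> (\<forall>S. length S = n \<longrightarrow> graphical S \<longrightarrow> sum_list S \<ge> l \<longrightarrow>
          potentially_graphical (p+2) (K_p11 p) S)" for l
    unfolding P_def by simp
  note PL2 = Pd[OF PL]
  show ?thesis
  proof (rule ccontr)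
    assume "\<not> ?thesis"
    then have lt: "Least P < T" unfolding T_def sig by simp
    have eL: "even (Least P)" using PL2 by (rule conjunct1)
    have eT: "even T" unfolding T_def by (rule dvd_triv_left)
    obtain a where a: "Least P = 2*a" using eL by (rule evenE)
    obtain b where b: "T = 2*b" using eT by (rule evenE)
    have "a < b" using lt a b by simp
    then have "2*a + 2 \<le> 2*b" by simp
    then have "Least P \<le> sum_list S" using a b TS by simp
    moreover have "graphical S" unfolding graphical_def using realS by blast
    moreover have "\<forall>S. length S = n \<longrightarrow> graphical S \<longrightarrow> sum_list S \<ge> Least P \<longrightarrow>
          potentially_graphical (p+2) (K_p11 p) S" using PL2 by (rule conjunct2)
    ultimately have "potentially_graphical (p+2) (K_p11 p) S" using lenS by simp
    then show False using notpot by simp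
  qed
qed

end
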